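(* Let $m,n\ge 3$ and let $e$ be any hyperedge of $\mathcal{C}^3_{m,n}$. Then $\mathcal{C}^3_{m,n}-e$ has exactly one negative Seidel eigenvalue, and all its remaining Seidel eigenvalues are positive.
   Context: For a hypergraph $\mathcal{H}$ and distinct vertices $i,j$, the co-degree $c_{ij}$ is the number of hyperedges containing both $i$ and $j$. The Seidel matrix $\mathcal{S}(\mathcal{H})$ has zero diagonal and $(i,j)$-entry $1-2c_{ij}$ for $i\neq j$; its eigenvalues (with multiplicity) are the Seidel eigenvalues of $\mathcal{H}$. The complete $3$-uniform bipartite hypergraph $\mathcal{C}^3_{m,n}=(V_1,V_2,E)$ has vertex set $V_1\sqcup V_2$, $|V_1|=m$, $|V_2|=n$, and $E$ = all $3$-subsets meeting both $V_1$ and $V_2$. For a hyperedge $e$, $\mathcal{H}-e$ denotes the hypergraph with the same vertex set and hyperedge set $E\setminus\{e\}$. *)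

theory Defs
  imports "Jordan_Normal_Form.Char_Poly" "HOL-Computational_Algebra.Polynomial"
begin

text \<open>A hypergraph on the vertex set {0..<N} is given by N and its set of hyperedges
  E (each hyperedge a subset of {0..<N}).\<close>

definition codegree :: "nat set set \<Rightarrow> nat \<Rightarrow> nat \<Rightarrow> nat" where
  "codegree E i j = card {f \<in> E. i \<in> f \<and> j \<in> f}"

definition seidel_matrix :: "nat \<Rightarrow> nat set set \<Rightarrow> real mat" where
  "seidel_matrix N E = mat N N (\<lambda>(i, j). if i = j then 0 else 1 - 2 * real (codegree E i j))"

definition seidel_eigenvalues :: "nat \<Rightarrow> nat set set \<Rightarrow> complex multiset" where
  "seidel_eigenvalues N E = proots (char_poly (map_mat complex_of_real (seidel_matrix N E)))"

definition bip_part1 :: "nat \<Rightarrow> nat \<Rightarrow> nat set" where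
  "bip_part1 m n = {0..<m}"

definition bip_part2 :: "nat \<Rightarrow> nat \<Rightarrow> nat set" where
  "bip_part2 m n = {m..<m+n}"

definition complete_bip3_edges :: "nat \<Rightarrow> nat \<Rightarrow> nat set set" where
  "complete_bip3_edges m n =
     {f. f \<subseteq> bip_part1 m n \<union> bip_part2 m n \<and> card f = 3
         \<and> f \<inter> bip_part1 m n \<noteq> {} \<and> f \<inter> bip_part2 m n \<noteq> {}}"

end

theory Submission
  imports Defs
begin

lemma sylvester_det:
  fixes U :: "'a::idom mat"
  assumes U: "U \<in> carrier_mat n k" and V: "V \<in> carrier_mat k n"
  shows "det (1\<^sub>m n + U * V) = det (1\<^sub>m k + V * U)"
proof -
  let ?M = "four_block_mat (1\<^sub>m n) (-U) V (1\<^sub>m k)"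
  have UV: "U * V \<in> carrier_mat n n" and VU: "V * U \<in> carrier_mat k k" using U V by auto
  have mU: "-U \<in> carrier_mat n k" using U by auto
  have a1: "V * (- U) + 1\<^sub>m k * (1\<^sub>m k + V * U) = 1\<^sub>m k"
  proof -
    have "V * (- U) = - (V * U)" using U V by auto
    moreover have "1\<^sub>m k * (1\<^sub>m k + V * U) = 1\<^sub>m k + V * U" using VU by auto
    moreover have "- (V * U) + (1\<^sub>m k + V * U) = 1\<^sub>m k"
      using U V by (intro eq_matI) auto
    ultimately show ?thesis by simp
  qed
  have c1: "1\<^sub>m k + V * U \<in> carrier_mat k k" using VU by simp
  have b1: "1\<^sub>m n * 1\<^sub>m n + 0\<^sub>m n k * 0\<^sub>m k n = (1\<^sub>m n :: 'a mat)" by simp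
  have b2: "1\<^sub>m n * -U + 0\<^sub>m n k * (1\<^sub>m k + V * U) = -U" using U V mU VU by simp
  have b3: "V * 1\<^sub>m n + 1\<^sub>m k * 0\<^sub>m k n = V" using V by simp
  have e1: "four_block_mat (1\<^sub>m n) (0\<^sub>m n k) V (1\<^sub>m k) * four_block_mat (1\<^sub>m n) (-U) (0\<^sub>m k n) (1\<^sub>m k + V * U) = ?M"
    apply (subst mult_four_block_mat[OF one_carrier_mat zero_carrier_mat V one_carrier_mat one_carrier_mat mU zero_carrier_mat c1])
    unfolding a1 b1 b2 b3 ..
  have a2: "(1\<^sub>m n + U * V) * 1\<^sub>m n + - U * V = 1\<^sub>m n"
  proof -
    have "- U * V = - (U * V)" using U V by auto
    moreover have "(1\<^sub>m n + U * V) * 1\<^sub>m n = 1\<^sub>m n + U * V" using UV by auto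
    moreover have "1\<^sub>m n + U * V + - (U * V) = 1\<^sub>m n"
      using U V by (intro eq_matI) auto
    ultimately show ?thesis by simp
  qed
  have c2: "1\<^sub>m n + U * V \<in> carrier_mat n n" using UV by simp
  have b5: "(1\<^sub>m n + U * V) * 0\<^sub>m n k + - U * 1\<^sub>m k = -U" using U V c2 mU by simp
  have b6: "0\<^sub>m k n * 1\<^sub>m n + 1\<^sub>m k * V = V" using V by simp
  have b7: "0\<^sub>m k n * 0\<^sub>m n k + 1\<^sub>m k * 1\<^sub>m k = (1\<^sub>m k :: 'a mat)" by simp
  have e2: "four_block_mat (1\<^sub>m n + U * V) (-U) (0\<^sub>m k n) (1\<^sub>m k) * four_block_mat (1\<^sub>m n) (0\<^sub>m n k) V (1\<^sub>m k) = ?M"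
    apply (subst mult_four_block_mat[OF c2 mU zero_carrier_mat one_carrier_mat one_carrier_mat zero_carrier_mat V one_carrier_mat])
    unfolding a2 b5 b6 b7 ..
  have L1: "four_block_mat (1\<^sub>m n) (0\<^sub>m n k) V (1\<^sub>m k) \<in> carrier_mat (n+k) (n+k)" using V by simp
  have R1: "four_block_mat (1\<^sub>m n) (-U) (0\<^sub>m k n) (1\<^sub>m k + V * U) \<in> carrier_mat (n+k) (n+k)" using mU c1 by simp
  have L2: "four_block_mat (1\<^sub>m n + U * V) (-U) (0\<^sub>m k n) (1\<^sub>m k) \<in> carrier_mat (n+k) (n+k)" using mU c2 by simp
  have R2: "four_block_mat (1\<^sub>m n) (0\<^sub>m n k) V (1\<^sub>m k) \<in> carrier_mat (n+k) (n+k)" using V by simp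
  have dL1: "det (four_block_mat (1\<^sub>m n) (0\<^sub>m n k) V (1\<^sub>m k)) = 1"
    by (subst det_four_block_mat_upper_right_zero[OF one_carrier_mat refl V one_carrier_mat]) simp
  have dR2: "det (four_block_mat (1\<^sub>m n) (0\<^sub>m n k) V (1\<^sub>m k)) = 1" by (rule dL1)
  have dR1: "det (four_block_mat (1\<^sub>m n) (-U) (0\<^sub>m k n) (1\<^sub>m k + V * U)) = det (1\<^sub>m k + V * U)"
    by (subst det_four_block_mat_lower_left_zero[OF one_carrier_mat mU refl c1]) simp
  have dL2: "det (four_block_mat (1\<^sub>m n + U * V) (-U) (0\<^sub>m k n) (1\<^sub>m k)) = det (1\<^sub>m n + U * V)"
    by (subst det_four_block_mat_lower_left_zero[OF c2 mU refl one_carrier_mat]) simp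
  have "det ?M = det (1\<^sub>m k + V * U)"
    unfolding e1[symmetric] det_mult[OF L1 R1] dL1 dR1 by simp
  moreover have "det ?M = det (1\<^sub>m n + U * V)"
    unfolding e2[symmetric] det_mult[OF L2 R2] dL2 dR2 by simp
  ultimately show ?thesis by simp
qed

lemma det_mat_diag: "det (mat_diag n f) = (\<Prod>i<n. f i)"
proof -
  have ut: "upper_triangular (mat_diag n f)" unfolding mat_diag_def upper_triangular_def by auto
  have "det (mat_diag n f) = prod_list (diag_mat (mat_diag n f))"
    by (rule det_upper_triangular[OF ut mat_diag_dim])
  also have "diag_mat (mat_diag n f) = map f [0..<n]"
    unfolding diag_mat_def mat_diag_def by (intro nth_equalityI) auto
  also have "prod_list (map f [0..<n]) = (\<Prod>i<n. f i)"
    by (subst prod.distinct_set_conv_list[symmetric]) (auto simp: atLeast0LessThan)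
  finally show ?thesis .
qed

lemma sum_indicator_card:
  fixes a :: real and N :: nat and cls :: "nat \<Rightarrow> nat"
  shows "(\<Sum>i<N. if cls i = d then a else 0) = a * real (card {i. i < N \<and> cls i = d})"
proof -
  have "(\<Sum>i<N. if cls i = d then a else 0) = (\<Sum>i\<in>{i. i < N \<and> cls i = d}. a)"
    by (subst sum.inter_filter[symmetric]) (auto intro!: sum.cong)
  thus ?thesis by simp
qed

lemma sum4_delta:
  fixes f :: "nat \<Rightarrow> real"
  assumes "c < 4"
  shows "(\<Sum>d<4. (if c = d then 1 else 0) * f d) = f c"
proof -
  have "(\<Sum>d<4. (if c = d then 1 else 0) * f d) = (\<Sum>d<4. if c = d then f d else 0)"
    by (rule sum.cong) auto
  thus ?thesis using assms by simp
qed

lemma equit_det: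
  fixes cls :: "nat \<Rightarrow> nat" and w :: "nat \<Rightarrow> nat \<Rightarrow> real" and x :: real and N :: nat
  assumes cls: "\<And>i. i < N \<Longrightarrow> cls i < 4"
  and nz: "\<And>c. c < 4 \<Longrightarrow> x + w c c \<noteq> 0"
  shows "det (x \<cdot>\<^sub>m 1\<^sub>m N - mat N N (\<lambda>(i,j). if i = j then 0 else w (cls i) (cls j))) * (\<Prod>c<4. x + w c c)
    = (\<Prod>i<N. x + w (cls i) (cls i)) *
      det (x \<cdot>\<^sub>m 1\<^sub>m 4 - mat 4 4 (\<lambda>(c,d). w c d * real (card {i. i < N \<and> cls i = d}) - (if c = d then w c c else 0)))"
proof -
  define K where "K = (\<lambda>d. real (card {i. i < N \<and> cls i = d}))"
  define U where "U = mat N 4 (\<lambda>(i,c). if cls i = c then 1 else (0::real))"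
  define Wm where "Wm = mat 4 4 (\<lambda>(c,d). w c d)"
  define Dx where "Dx = mat_diag N (\<lambda>i. x + w (cls i) (cls i))"
  define Di where "Di = mat_diag N (\<lambda>i. 1 / (x + w (cls i) (cls i)))"
  define Dq where "Dq = mat_diag 4 (\<lambda>c. x + w c c)"
  have nzi: "\<And>i. i < N \<Longrightarrow> x + w (cls i) (cls i) \<noteq> 0" using cls nz by auto
  have U: "U \<in> carrier_mat N 4" unfolding U_def by simp
  have Wm: "Wm \<in> carrier_mat 4 4" unfolding Wm_def by simp
  have DiU: "Di * (-U) = mat N 4 (\<lambda>(i,c). - (if cls i = c then 1 else 0) / (x + w (cls i) (cls i)))"
    unfolding Di_def by (subst mat_diag_mult_left[of _ _ 4]) (auto simp: U_def intro!: eq_matI)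
  have WU: "Wm * U\<^sup>T = mat 4 N (\<lambda>(c,j). w c (cls j))"
  proof (rule eq_matI)
    fix c j assume c: "c < dim_row (mat 4 N (\<lambda>(c,j). w c (cls j)))" and j: "j < dim_col (mat 4 N (\<lambda>(c,j). w c (cls j)))"
    have "(Wm * U\<^sup>T) $$ (c, j) = (\<Sum>d<4. w c d * (if cls j = d then 1 else 0))"
      using c j unfolding Wm_def U_def by (auto simp: scalar_prod_def atLeast0LessThan)
    also have "\<dots> = w c (cls j)" using cls[of j] j by (simp add: if_distrib sum.delta cong: if_cong)
    finally show "(Wm * U\<^sup>T) $$ (c, j) = mat 4 N (\<lambda>(c,j). w c (cls j)) $$ (c, j)" using c j by simp
  qed (auto simp: Wm_def U_def)
  define P where "P = (Di * (-U)) * (Wm * U\<^sup>T)"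
  have P: "P = mat N N (\<lambda>(i,j). - w (cls i) (cls j) / (x + w (cls i) (cls i)))"
  proof (rule eq_matI)
    fix i j assume i: "i < dim_row (mat N N (\<lambda>(i,j). - w (cls i) (cls j) / (x + w (cls i) (cls i))))"
      and j: "j < dim_col (mat N N (\<lambda>(i,j). - w (cls i) (cls j) / (x + w (cls i) (cls i))))"
    have "P $$ (i, j) = (\<Sum>c<4. - (if cls i = c then 1 else 0) / (x + w (cls i) (cls i)) * w c (cls j))"
      using i j unfolding P_def DiU WU by (auto simp: scalar_prod_def atLeast0LessThan)
    also have "\<dots> = (\<Sum>c<4. if cls i = c then - w c (cls j) / (x + w (cls i) (cls i)) else 0)"
      by (rule sum.cong) auto
    also have "\<dots> = - w (cls i) (cls j) / (x + w (cls i) (cls i))"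
      using cls[of i] i by simp
    finally show "P $$ (i, j) = mat N N (\<lambda>(i,j). - w (cls i) (cls j) / (x + w (cls i) (cls i))) $$ (i, j)"
      using i j by simp
  qed (auto simp: P_def DiU WU)
  have PC: "P \<in> carrier_mat N N" unfolding P by simp
  have step1: "x \<cdot>\<^sub>m 1\<^sub>m N - mat N N (\<lambda>(i,j). if i = j then 0 else w (cls i) (cls j)) = Dx * (1\<^sub>m N + P)"
    unfolding Dx_def
    apply (subst mat_diag_mult_left[of _ _ N])
    using PC apply simp
    apply (rule eq_matI)
       apply (auto simp: P)
     apply (frule nzi; simp add: field_simps)+
    done
  define R where "R = (Wm * U\<^sup>T) * (Di * (-U))"
  have R: "R = mat 4 4 (\<lambda>(c,d). - w c d * K d / (x + w d d))"
  proof (rule eq_matI)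
    fix c d assume c: "c < dim_row (mat 4 4 (\<lambda>(c,d). - w c d * K d / (x + w d d)))"
      and d: "d < dim_col (mat 4 4 (\<lambda>(c,d). - w c d * K d / (x + w d d)))"
    have "R $$ (c, d) = (\<Sum>i<N. w c (cls i) * (- (if cls i = d then 1 else 0) / (x + w (cls i) (cls i))))"
      using c d unfolding R_def DiU WU by (auto simp: scalar_prod_def atLeast0LessThan)
    also have "\<dots> = (\<Sum>i<N. if cls i = d then - w c d / (x + w d d) else 0)"
      by (rule sum.cong) auto
    also have "\<dots> = - w c d * K d / (x + w d d)"
      unfolding sum_indicator_card K_def by simp
    finally show "R $$ (c, d) = mat 4 4 (\<lambda>(c,d). - w c d * K d / (x + w d d)) $$ (c, d)"
      using c d by simp
  qed (auto simp: R_def DiU WU)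
  have RC: "R \<in> carrier_mat 4 4" unfolding R by simp
  have step2: "(1\<^sub>m 4 + R) * Dq = x \<cdot>\<^sub>m 1\<^sub>m 4 - mat 4 4 (\<lambda>(c,d). w c d * real (card {i. i < N \<and> cls i = d}) - (if c = d then w c c else 0))"
    unfolding Dq_def
    apply (subst mat_diag_mult_right[of _ 4])
    using RC apply simp
    apply (rule eq_matI)
       apply (auto simp: R K_def)
     apply (frule nz; simp add: field_simps)+
    done
  have DiUC: "Di * (-U) \<in> carrier_mat N 4" unfolding DiU by simp
  have WUC: "Wm * U\<^sup>T \<in> carrier_mat 4 N" unfolding WU by simp
  have syl: "det (1\<^sub>m N + P) = det (1\<^sub>m 4 + R)"
    unfolding P_def R_def by (rule sylvester_det[OF DiUC WUC])
  have "det (x \<cdot>\<^sub>m 1\<^sub>m N - mat N N (\<lambda>(i,j). if i = j then 0 else w (cls i) (cls j))) * (\<Prod>c<4. x + w c c)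
      = det Dx * det (1\<^sub>m 4 + R) * det Dq"
    unfolding step1 Dq_def det_mat_diag
    by (subst det_mult[of _ N]) (use PC syl in \<open>auto simp: Dx_def\<close>)
  also have "\<dots> = det Dx * det ((1\<^sub>m 4 + R) * Dq)"
    by (subst det_mult[of _ 4]) (use RC in \<open>auto simp: Dq_def\<close>)
  finally show ?thesis unfolding step2 Dx_def det_mat_diag .
qed

lemma poly_eq_cofinite:
  fixes p q :: "real poly" and S :: "real set"
  assumes "finite S" and "\<And>x. x \<notin> S \<Longrightarrow> poly p x = poly q x"
  shows "p = q"
proof (rule ccontr)
  assume ne: "p \<noteq> q"
  hence "finite {x. poly (p - q) x = 0}" by (intro poly_roots_finite) simp
  moreover have "- S \<subseteq> {x. poly (p - q) x = 0}" using assms(2) by auto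
  ultimately have "finite (- S)" by (rule finite_subset[rotated])
  with assms(1) have "finite (UNIV :: real set)" by (metis finite_Un Compl_partition)
  thus False by (simp add: infinite_UNIV_char_0)
qed

lemma char_poly_eval:
  fixes A :: "real mat"
  assumes A: "A \<in> carrier_mat n n"
  shows "poly (char_poly A) x = det (x \<cdot>\<^sub>m 1\<^sub>m n - A)"
proof -
  have "- char_matrix A x = x \<cdot>\<^sub>m 1\<^sub>m n - A"
    using A unfolding char_matrix_def by (intro eq_matI) auto
  thus ?thesis using char_poly_matrix[OF A] by simp
qed

lemma prod_fibres4:
  fixes f :: "nat \<Rightarrow> 'a::comm_monoid_mult" and N :: nat
  assumes cls: "\<And>i. i < N \<Longrightarrow> cls i < (4::nat)"
  shows "(\<Prod>i<N. f (cls i)) = (\<Prod>c<4. f c ^ card {i. i < N \<and> cls i = c})"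
proof -
  have "(\<Prod>i<N. f (cls i)) = (\<Prod>c<4. \<Prod>i\<in>{i. i \<in> {..<N} \<and> cls i = c}. f (cls i))"
    by (rule prod.group[symmetric]) (use cls in auto)
  also have "\<dots> = (\<Prod>c<4. f c ^ card {i. i < N \<and> cls i = c})"
  proof (rule prod.cong[OF refl])
    fix c
    have "(\<Prod>i\<in>{i. i \<in> {..<N} \<and> cls i = c}. f (cls i)) = (\<Prod>i\<in>{i. i < N \<and> cls i = c}. f c)"
      by (rule prod.cong) auto
    thus "(\<Prod>i\<in>{i. i \<in> {..<N} \<and> cls i = c}. f (cls i)) = f c ^ card {i. i < N \<and> cls i = c}" by simp
  qed
  finally show ?thesis .
qed

lemma equit_charpoly:
  fixes cls :: "nat \<Rightarrow> nat" and w :: "nat \<Rightarrow> nat \<Rightarrow> real" and N :: nat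
  assumes cls: "\<And>i. i < N \<Longrightarrow> cls i < 4"
  and K1: "\<And>c. c < 4 \<Longrightarrow> card {i. i < N \<and> cls i = c} \<ge> 1"
  shows "char_poly (mat N N (\<lambda>(i,j). if i = j then 0 else w (cls i) (cls j)))
    = (\<Prod>c<4. [: w c c, 1 :] ^ (card {i. i < N \<and> cls i = c} - 1)) *
      char_poly (mat 4 4 (\<lambda>(c,d). w c d * real (card {i. i < N \<and> cls i = d}) - (if c = d then w c c else 0)))"
    (is "char_poly ?A = ?P * char_poly ?Q")
proof -
  define F where "F = (\<Prod>c<4. [: w c c, 1 :])"
  have FZ: "F \<noteq> 0" unfolding F_def by simp
  have "char_poly ?A * F = (\<Prod>i<N. [: w (cls i) (cls i), 1 :]) * char_poly ?Q"
  proof (rule poly_eq_cofinite[of "(\<lambda>c. - w c c) ` {..<4}"])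
    fix x assume x: "x \<notin> (\<lambda>c. - w c c) ` {..<4}"
    have e: "\<And>a. poly [:a, 1:] x = x + a" by simp
    have nz: "\<And>c. c < 4 \<Longrightarrow> x + w c c \<noteq> 0"
    proof
      fix c assume c: "c < 4" and h: "x + w c c = 0"
      hence "x = - w c c" by simp
      hence "x \<in> (\<lambda>c. - w c c) ` {..<4}" using c by auto
      thus False using x by simp
    qed
    show "poly (char_poly ?A * F) x = poly ((\<Prod>i<N. [: w (cls i) (cls i), 1 :]) * char_poly ?Q) x"
      unfolding poly_mult F_def poly_prod e
      apply (subst char_poly_eval[of _ N], simp)
      apply (subst char_poly_eval[of _ 4], simp)
      by (rule equit_det[OF cls nz])
  qed simp
  also have "(\<Prod>i<N. [: w (cls i) (cls i), 1 :]) = (\<Prod>c<4. [: w c c, 1 :] ^ card {i. i < N \<and> cls i = c})"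
    by (rule prod_fibres4[OF cls])
  also have "\<dots> = ?P * F"
    unfolding F_def prod.distrib[symmetric]
  proof (rule prod.cong[OF refl])
    fix c assume "c \<in> {..<4::nat}"
    hence "Suc 0 \<le> card {i. i < N \<and> cls i = c}" using K1[of c] by simp
    then obtain k where k: "card {i. i < N \<and> cls i = c} = Suc k" using Suc_le_D by blast
    show "[: w c c, 1 :] ^ card {i. i < N \<and> cls i = c} = [: w c c, 1 :] ^ (card {i. i < N \<and> cls i = c} - 1) * [: w c c, 1 :]"
      unfolding k by (simp only: power_Suc2 diff_Suc_1)
  qed
  finally have "char_poly ?A * F = ?P * char_poly ?Q * F" by (simp only: mult_ac)
  thus ?thesis using FZ mult_right_cancel by blast
qed

lemma det3:
  fixes A :: "'a::comm_ring_1 mat"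
  assumes A: "A \<in> carrier_mat 3 3"
  shows "det A = A$$(0,0) * (A$$(1,1) * A$$(2,2) - A$$(1,2) * A$$(2,1))
     - A$$(0,1) * (A$$(1,0) * A$$(2,2) - A$$(1,2) * A$$(2,0))
     + A$$(0,2) * (A$$(1,0) * A$$(2,1) - A$$(1,1) * A$$(2,0))"
proof -
  have d2: "\<And>B :: 'a mat. B \<in> carrier_mat 2 2 \<Longrightarrow> det B = B$$(0,0) * B$$(1,1) - B$$(0,1) * B$$(1,0)"
    by (subst laplace_expansion_row[of _ 2 0]) (auto simp: cofactor_def mat_delete_def det_single numeral_2_eq_2 lessThan_Suc)
  show ?thesis
    apply (subst laplace_expansion_row[OF A, of 0], simp)
    apply (simp add: cofactor_def numeral_3_eq_3 lessThan_Suc)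
    apply (subst (1 2 3) d2)
    using A by (auto simp: mat_delete_def algebra_simps numeral_2_eq_2)
qed

lemma four_Suc: "(4::nat) = Suc 3" by simp

lemma det4:
  fixes A :: "'a::comm_ring_1 mat"
  assumes A: "A \<in> carrier_mat 4 4"
  shows "det A = A$$(0,0) * (A$$(1,1) * (A$$(2,2) * A$$(3,3) - A$$(2,3) * A$$(3,2)) - A$$(1,2) * (A$$(2,1) * A$$(3,3) - A$$(2,3) * A$$(3,1)) + A$$(1,3) * (A$$(2,1) * A$$(3,2) - A$$(2,2) * A$$(3,1)))
     - A$$(0,1) * (A$$(1,0) * (A$$(2,2) * A$$(3,3) - A$$(2,3) * A$$(3,2)) - A$$(1,2) * (A$$(2,0) * A$$(3,3) - A$$(2,3) * A$$(3,0)) + A$$(1,3) * (A$$(2,0) * A$$(3,2) - A$$(2,2) * A$$(3,0)))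
     + A$$(0,2) * (A$$(1,0) * (A$$(2,1) * A$$(3,3) - A$$(2,3) * A$$(3,1)) - A$$(1,1) * (A$$(2,0) * A$$(3,3) - A$$(2,3) * A$$(3,0)) + A$$(1,3) * (A$$(2,0) * A$$(3,1) - A$$(2,1) * A$$(3,0)))
     - A$$(0,3) * (A$$(1,0) * (A$$(2,1) * A$$(3,2) - A$$(2,2) * A$$(3,1)) - A$$(1,1) * (A$$(2,0) * A$$(3,2) - A$$(2,2) * A$$(3,0)) + A$$(1,2) * (A$$(2,0) * A$$(3,1) - A$$(2,1) * A$$(3,0)))"
proof -
  show ?thesis
    apply (subst laplace_expansion_row[OF A, of 0], simp)
    apply (simp add: cofactor_def four_Suc numeral_3_eq_3 lessThan_Suc)
    apply (subst (1 2 3 4) det3)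
    using A by (auto simp: mat_delete_def algebra_simps numeral_2_eq_2 numeral_3_eq_3)
qed

definition wq :: "real \<Rightarrow> real \<Rightarrow> nat \<Rightarrow> nat \<Rightarrow> real" where
  "wq m n c d = 1 - 2 * ((if c < 2 \<and> d < 2 then n else if 2 \<le> c \<and> 2 \<le> d then m else m + n - 2) - (if odd c \<and> odd d then 1 else 0))"

definition qmat :: "real \<Rightarrow> real \<Rightarrow> (nat \<Rightarrow> real) \<Rightarrow> real mat" where
  "qmat m n k = mat 4 4 (\<lambda>(c,d). wq m n c d * k d - (if c = d then wq m n c c else 0))"

definition k1 :: "real \<Rightarrow> real \<Rightarrow> nat \<Rightarrow> real" where
  "k1 m n d = (if d = 0 then m - 1 else if d = 1 then 1 else if d = 2 then n - 2 else 2)"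

definition k2 :: "real \<Rightarrow> real \<Rightarrow> nat \<Rightarrow> real" where
  "k2 m n d = (if d = 0 then m - 2 else if d = 1 then 2 else if d = 2 then n - 1 else 1)"

lemma detQ:
  fixes f :: "nat \<times> nat \<Rightarrow> real"
  shows "det (x \<cdot>\<^sub>m 1\<^sub>m 4 - mat 4 4 f) = (x - f (0,0)) * ((x - f (1,1)) * ((x - f (2,2)) * (x - f (3,3)) - (- f (2,3)) * (- f (3,2))) - (- f (1,2)) * ((- f (2,1)) * (x - f (3,3)) - (- f (2,3)) * (- f (3,1))) + (- f (1,3)) * ((- f (2,1)) * (- f (3,2)) - (x - f (2,2)) * (- f (3,1))))
     - (- f (0,1)) * ((- f (1,0)) * ((x - f (2,2)) * (x - f (3,3)) - (- f (2,3)) * (- f (3,2))) - (- f (1,2)) * ((- f (2,0)) * (x - f (3,3)) - (- f (2,3)) * (- f (3,0))) + (- f (1,3)) * ((- f (2,0)) * (- f (3,2)) - (x - f (2,2)) * (- f (3,0))))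
     + (- f (0,2)) * ((- f (1,0)) * ((- f (2,1)) * (x - f (3,3)) - (- f (2,3)) * (- f (3,1))) - (x - f (1,1)) * ((- f (2,0)) * (x - f (3,3)) - (- f (2,3)) * (- f (3,0))) + (- f (1,3)) * ((- f (2,0)) * (- f (3,1)) - (- f (2,1)) * (- f (3,0))))
     - (- f (0,3)) * ((- f (1,0)) * ((- f (2,1)) * (- f (3,2)) - (x - f (2,2)) * (- f (3,1))) - (x - f (1,1)) * ((- f (2,0)) * (- f (3,2)) - (x - f (2,2)) * (- f (3,0))) + (- f (1,2)) * ((- f (2,0)) * (- f (3,1)) - (- f (2,1)) * (- f (3,0))))"
  by (subst det4) auto

lemma c1_0:
  fixes a b :: real
  assumes a: "0 \<le> a" and b: "0 \<le> b"
  shows "det ((0) \<cdot>\<^sub>m 1\<^sub>m 4 - qmat (a+3) (b+3) (k1 (a+3) (b+3))) < 0"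
proof -
  have eq: "det ((0) \<cdot>\<^sub>m 1\<^sub>m 4 - qmat (a+3) (b+3) (k1 (a+3) (b+3))) = - (7811 + 11541*b + 6482*b^2 + 1660*b^3 + 168*b^4 + 10665*a + 13220*a*b + 6070*a*b^2 + 1240*a*b^3 + 104*a*b^4 + 5542*a^2 + 5670*a^2*b + 2012*a^2*b^2 + 280*a^2*b^3 + 16*a^2*b^4 + 1308*a^3 + 1104*a^3*b + 280*a^3*b^2 + 16*a^3*b^3 + 120*a^4 + 88*a^4*b + 16*a^4*b^2)"
    unfolding qmat_def detQ by (simp add: wq_def k1_def algebra_simps power2_eq_square power3_eq_cube power4_eq_xxxx)
  have P: "0 < 7811 + 11541*b + 6482*b^2 + 1660*b^3 + 168*b^4 + 10665*a + 13220*a*b + 6070*a*b^2 + 1240*a*b^3 + 104*a*b^4 + 5542*a^2 + 5670*a^2*b + 2012*a^2*b^2 + 280*a^2*b^3 + 16*a^2*b^4 + 1308*a^3 + 1104*a^3*b + 280*a^3*b^2 + 16*a^3*b^3 + 120*a^4 + 88*a^4*b + 16*a^4*b^2"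
    by (intro add_pos_nonneg mult_nonneg_nonneg zero_le_power) (simp_all add: a b)
  show ?thesis unfolding eq using P by simp
qed

lemma c1_x1:
  fixes a b :: real
  assumes a: "0 \<le> a" and b: "0 \<le> b"
  shows "det ((2*(b+3)-1) \<cdot>\<^sub>m 1\<^sub>m 4 - qmat (a+3) (b+3) (k1 (a+3) (b+3))) > 0"
proof -
  have eq: "det ((2*(b+3)-1) \<cdot>\<^sub>m 1\<^sub>m 4 - qmat (a+3) (b+3) (k1 (a+3) (b+3))) = (384 + 512*b + 288*b^2 + 64*b^3 + 640*a + 672*a*b + 208*a*b^2 + 32*a*b^3 + 288*a^2 + 272*a^2*b + 32*a^2*b^2 + 32*a^3 + 32*a^3*b)"
    unfolding qmat_def detQ by (simp add: wq_def k1_def algebra_simps power2_eq_square power3_eq_cube power4_eq_xxxx)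
  have P: "0 < 384 + 512*b + 288*b^2 + 64*b^3 + 640*a + 672*a*b + 208*a*b^2 + 32*a*b^3 + 288*a^2 + 272*a^2*b + 32*a^2*b^2 + 32*a^3 + 32*a^3*b"
    by (intro add_pos_nonneg mult_nonneg_nonneg zero_le_power) (simp_all add: a b)
  show ?thesis unfolding eq using P by simp
qed

lemma c1_x2:
  fixes a b :: real
  assumes a: "0 \<le> a" and b: "0 \<le> b"
  shows "det ((2*(a+3)+2*(b+3)-5) \<cdot>\<^sub>m 1\<^sub>m 4 - qmat (a+3) (b+3) (k1 (a+3) (b+3))) < 0"
proof -
  have eq: "det ((2*(a+3)+2*(b+3)-5) \<cdot>\<^sub>m 1\<^sub>m 4 - qmat (a+3) (b+3) (k1 (a+3) (b+3))) = - (160 + 416*b + 456*b^2 + 248*b^3 + 48*b^4 + 464*a + 1208*a*b + 1112*a*b^2 + 432*a*b^3 + 64*a*b^4 + 480*a^2 + 1024*a^2*b + 696*a^2*b^2 + 168*a^2*b^3 + 16*a^2*b^4 + 208*a^3 + 360*a^3*b + 168*a^3*b^2 + 16*a^3*b^3 + 32*a^4 + 48*a^4*b + 16*a^4*b^2)"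
    unfolding qmat_def detQ by (simp add: wq_def k1_def algebra_simps power2_eq_square power3_eq_cube power4_eq_xxxx)
  have P: "0 < 160 + 416*b + 456*b^2 + 248*b^3 + 48*b^4 + 464*a + 1208*a*b + 1112*a*b^2 + 432*a*b^3 + 64*a*b^4 + 480*a^2 + 1024*a^2*b + 696*a^2*b^2 + 168*a^2*b^3 + 16*a^2*b^4 + 208*a^3 + 360*a^3*b + 168*a^3*b^2 + 16*a^3*b^3 + 32*a^4 + 48*a^4*b + 16*a^4*b^2"
    by (intro add_pos_nonneg mult_nonneg_nonneg zero_le_power) (simp_all add: a b)
  show ?thesis unfolding eq using P by simp
qed

lemma c2_0:
  fixes a b :: real
  assumes a: "0 \<le> a" and b: "0 \<le> b"
  shows "det ((0) \<cdot>\<^sub>m 1\<^sub>m 4 - qmat (a+3) (b+3) (k2 (a+3) (b+3))) < 0"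
proof -
  have eq: "det ((0) \<cdot>\<^sub>m 1\<^sub>m 4 - qmat (a+3) (b+3) (k2 (a+3) (b+3))) = - (7811 + 10665*b + 5542*b^2 + 1308*b^3 + 120*b^4 + 11541*a + 13220*a*b + 5670*a*b^2 + 1104*a*b^3 + 88*a*b^4 + 6482*a^2 + 6070*a^2*b + 2012*a^2*b^2 + 280*a^2*b^3 + 16*a^2*b^4 + 1660*a^3 + 1240*a^3*b + 280*a^3*b^2 + 16*a^3*b^3 + 168*a^4 + 104*a^4*b + 16*a^4*b^2)"
    unfolding qmat_def detQ by (simp add: wq_def k2_def algebra_simps power2_eq_square power3_eq_cube power4_eq_xxxx)
  have P: "0 < 7811 + 10665*b + 5542*b^2 + 1308*b^3 + 120*b^4 + 11541*a + 13220*a*b + 5670*a*b^2 + 1104*a*b^3 + 88*a*b^4 + 6482*a^2 + 6070*a^2*b + 2012*a^2*b^2 + 280*a^2*b^3 + 16*a^2*b^4 + 1660*a^3 + 1240*a^3*b + 280*a^3*b^2 + 16*a^3*b^3 + 168*a^4 + 104*a^4*b + 16*a^4*b^2"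
    by (intro add_pos_nonneg mult_nonneg_nonneg zero_le_power) (simp_all add: a b)
  show ?thesis unfolding eq using P by simp
qed

lemma c2_x1:
  fixes a b :: real
  assumes a: "0 \<le> a" and b: "0 \<le> b"
  shows "det ((2*(a+3)-1) \<cdot>\<^sub>m 1\<^sub>m 4 - qmat (a+3) (b+3) (k2 (a+3) (b+3))) > 0"
proof -
  have eq: "det ((2*(a+3)-1) \<cdot>\<^sub>m 1\<^sub>m 4 - qmat (a+3) (b+3) (k2 (a+3) (b+3))) = (384 + 640*b + 288*b^2 + 32*b^3 + 512*a + 672*a*b + 272*a*b^2 + 32*a*b^3 + 288*a^2 + 208*a^2*b + 32*a^2*b^2 + 64*a^3 + 32*a^3*b)"
    unfolding qmat_def detQ by (simp add: wq_def k2_def algebra_simps power2_eq_square power3_eq_cube power4_eq_xxxx)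
  have P: "0 < 384 + 640*b + 288*b^2 + 32*b^3 + 512*a + 672*a*b + 272*a*b^2 + 32*a*b^3 + 288*a^2 + 208*a^2*b + 32*a^2*b^2 + 64*a^3 + 32*a^3*b"
    by (intro add_pos_nonneg mult_nonneg_nonneg zero_le_power) (simp_all add: a b)
  show ?thesis unfolding eq using P by simp
qed

lemma c2_x2:
  fixes a b :: real
  assumes a: "0 \<le> a" and b: "0 \<le> b"
  shows "det ((2*(a+3)+2*(b+3)-5) \<cdot>\<^sub>m 1\<^sub>m 4 - qmat (a+3) (b+3) (k2 (a+3) (b+3))) < 0"
proof -
  have eq: "det ((2*(a+3)+2*(b+3)-5) \<cdot>\<^sub>m 1\<^sub>m 4 - qmat (a+3) (b+3) (k2 (a+3) (b+3))) = - (160 + 464*b + 480*b^2 + 208*b^3 + 32*b^4 + 416*a + 1208*a*b + 1024*a*b^2 + 360*a*b^3 + 48*a*b^4 + 456*a^2 + 1112*a^2*b + 696*a^2*b^2 + 168*a^2*b^3 + 16*a^2*b^4 + 248*a^3 + 432*a^3*b + 168*a^3*b^2 + 16*a^3*b^3 + 48*a^4 + 64*a^4*b + 16*a^4*b^2)"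
    unfolding qmat_def detQ by (simp add: wq_def k2_def algebra_simps power2_eq_square power3_eq_cube power4_eq_xxxx)
  have P: "0 < 160 + 464*b + 480*b^2 + 208*b^3 + 32*b^4 + 416*a + 1208*a*b + 1024*a*b^2 + 360*a*b^3 + 48*a*b^4 + 456*a^2 + 1112*a^2*b + 696*a^2*b^2 + 168*a^2*b^3 + 16*a^2*b^4 + 248*a^3 + 432*a^3*b + 168*a^3*b^2 + 16*a^3*b^3 + 48*a^4 + 64*a^4*b + 16*a^4*b^2"
    by (intro add_pos_nonneg mult_nonneg_nonneg zero_le_power) (simp_all add: a b)
  show ?thesis unfolding eq using P by simp
qed

lemma card3_pair:
  assumes "card f = 3" "i \<in> f" "j \<in> f" "i \<noteq> j"
  shows "\<exists>k. f = {i, j, k} \<and> k \<noteq> i \<and> k \<noteq> j"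
proof -
  obtain x y z where f: "f = {x, y, z}" "x \<noteq> y" "y \<noteq> z" "x \<noteq> z"
    using assms(1) unfolding card_3_iff by blast
  show ?thesis using assms(2-4) unfolding f(1) using f(2-4) by auto
qed

lemma card_insert3: "k \<noteq> i \<Longrightarrow> k \<noteq> j \<Longrightarrow> i \<noteq> j \<Longrightarrow> card {i, j, k} = 3"
  by simp

definition third_set :: "nat \<Rightarrow> nat \<Rightarrow> nat \<Rightarrow> nat \<Rightarrow> nat set" where
  "third_set m n i j = {k. k < m + n \<and> k \<noteq> i \<and> k \<noteq> j \<and> (i < m \<and> j < m \<longrightarrow> m \<le> k) \<and> (m \<le> i \<and> m \<le> j \<longrightarrow> k < m)}"

lemma edges_through:
  assumes ij: "i \<noteq> j" "i < m + n" "j < m + n"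
  shows "{f \<in> complete_bip3_edges m n. i \<in> f \<and> j \<in> f} = (\<lambda>k. {i, j, k}) ` third_set m n i j"
proof (intro equalityI subsetI)
  fix f assume "f \<in> {f \<in> complete_bip3_edges m n. i \<in> f \<and> j \<in> f}"
  hence f: "f \<subseteq> {0..<m} \<union> {m..<m+n}" "card f = 3" "f \<inter> {0..<m} \<noteq> {}" "f \<inter> {m..<m+n} \<noteq> {}" "i \<in> f" "j \<in> f"
    unfolding complete_bip3_edges_def bip_part1_def bip_part2_def by auto
  obtain k where k: "f = {i, j, k}" "k \<noteq> i" "k \<noteq> j" using card3_pair[OF f(2) f(5) f(6) ij(1)] by blast
  have "k \<in> third_set m n i j"
    using f(1,3,4) unfolding k(1) third_set_def using k(2,3) by auto
  thus "f \<in> (\<lambda>k. {i, j, k}) ` third_set m n i j" using k(1) by blast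
next
  fix f assume "f \<in> (\<lambda>k. {i, j, k}) ` third_set m n i j"
  then obtain k where k: "f = {i, j, k}" "k \<in> third_set m n i j" by blast
  hence kk: "k < m + n" "k \<noteq> i" "k \<noteq> j" "i < m \<and> j < m \<longrightarrow> m \<le> k" "m \<le> i \<and> m \<le> j \<longrightarrow> k < m"
    unfolding third_set_def by auto
  have "card f = 3" unfolding k(1) using kk(2,3) ij(1) by simp
  moreover have "f \<subseteq> {0..<m} \<union> {m..<m+n}" using kk(1) ij(2,3) unfolding k(1) by auto
  moreover have "f \<inter> {0..<m} \<noteq> {}" using kk(4,5) unfolding k(1) by auto
  moreover have "f \<inter> {m..<m+n} \<noteq> {}" using kk(4,5) ij(2,3) kk(1) unfolding k(1) by auto
  ultimately show "f \<in> {f \<in> complete_bip3_edges m n. i \<in> f \<and> j \<in> f}"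
    unfolding complete_bip3_edges_def bip_part1_def bip_part2_def k(1) by auto
qed

lemma card_third_set:
  assumes ij: "i \<noteq> j" "i < m + n" "j < m + n"
  shows "card (third_set m n i j) = (if i < m \<and> j < m then n else if m \<le> i \<and> m \<le> j then m else m + n - 2)"
proof -
  consider (a) "i < m" "j < m" | (b) "m \<le> i" "m \<le> j" | (c) "\<not> (i < m \<and> j < m)" "\<not> (m \<le> i \<and> m \<le> j)" by linarith
  thus ?thesis
  proof cases
    case a
    hence "third_set m n i j = {m..<m+n}" unfolding third_set_def by auto
    thus ?thesis using a by simp
  next
    case b
    hence "third_set m n i j = {0..<m}" unfolding third_set_def using ij by auto
    thus ?thesis using b by simp
  next
    case c
    hence "third_set m n i j = {0..<m+n} - {i, j}" unfolding third_set_def by auto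
    hence "card (third_set m n i j) = m + n - 2" using ij by (simp add: card_Diff_subset)
    thus ?thesis using c by presburger
  qed
qed

lemma codegree_full:
  assumes ij: "i \<noteq> j" "i < m + n" "j < m + n"
  shows "codegree (complete_bip3_edges m n) i j = (if i < m \<and> j < m then n else if m \<le> i \<and> m \<le> j then m else m + n - 2)"
proof -
  have "inj_on (\<lambda>k. {i, j, k}) (third_set m n i j)"
    unfolding third_set_def by (rule inj_onI) (auto simp: insert_eq_iff doubleton_eq_iff)
  hence "card ((\<lambda>k. {i, j, k}) ` third_set m n i j) = card (third_set m n i j)" by (rule card_image)
  thus ?thesis unfolding codegree_def edges_through[OF ij] using card_third_set[OF ij] by simp
qed

lemma codegree_minus:
  assumes e: "e \<in> E" and fin: "finite E"
  shows "codegree (E - {e}) i j = codegree E i j - (if i \<in> e \<and> j \<in> e then 1 else 0)"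
proof -
  have "{f \<in> E - {e}. i \<in> f \<and> j \<in> f} = {f \<in> E. i \<in> f \<and> j \<in> f} - {e}" by auto
  thus ?thesis unfolding codegree_def using e fin by (auto simp: card_Diff_singleton_if)
qed

lemma finite_edges: "finite (complete_bip3_edges m n)"
proof -
  have "complete_bip3_edges m n \<subseteq> Pow {0..<m+n}"
    unfolding complete_bip3_edges_def bip_part1_def bip_part2_def by auto
  thus ?thesis by (rule finite_subset) simp
qed

lemma seidel_eq:
  assumes m: "m \<ge> 3" and n: "n \<ge> 3" and e: "e \<in> complete_bip3_edges m n"
  shows "seidel_matrix (m+n) (complete_bip3_edges m n - {e}) =
    mat (m+n) (m+n) (\<lambda>(i,j). if i = j then 0 else
       wq (real m) (real n) ((if i < m then 0 else 2) + (if i \<in> e then 1 else 0)) ((if j < m then 0 else 2) + (if j \<in> e then 1 else 0)))"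
proof (rule eq_matI)
  fix i j assume i: "i < dim_row (mat (m+n) (m+n) (\<lambda>(i,j). if i = j then 0 else
       wq (real m) (real n) ((if i < m then 0 else 2) + (if i \<in> e then 1 else 0)) ((if j < m then 0 else 2) + (if j \<in> e then 1 else 0))))"
    and j: "j < dim_col (mat (m+n) (m+n) (\<lambda>(i,j). if i = j then 0 else
       wq (real m) (real n) ((if i < m then 0 else 2) + (if i \<in> e then 1 else 0)) ((if j < m then 0 else 2) + (if j \<in> e then 1 else 0))))"
  hence i': "i < m + n" and j': "j < m + n" by auto
  show "seidel_matrix (m+n) (complete_bip3_edges m n - {e}) $$ (i, j) = mat (m+n) (m+n) (\<lambda>(i,j). if i = j then 0 else
       wq (real m) (real n) ((if i < m then 0 else 2) + (if i \<in> e then 1 else 0)) ((if j < m then 0 else 2) + (if j \<in> e then 1 else 0))) $$ (i, j)"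
  proof (cases "i = j")
    case True thus ?thesis using i' by (simp add: seidel_matrix_def)
  next
    case False
    have cd: "codegree (complete_bip3_edges m n - {e}) i j =
        (if i < m \<and> j < m then n else if m \<le> i \<and> m \<le> j then m else m + n - 2) - (if i \<in> e \<and> j \<in> e then 1 else 0)"
      unfolding codegree_minus[OF e finite_edges] codegree_full[OF False i' j'] ..
    have r: "real (codegree (complete_bip3_edges m n - {e}) i j) =
        (if i < m \<and> j < m then real n else if m \<le> i \<and> m \<le> j then real m else real m + real n - 2) - (if i \<in> e \<and> j \<in> e then 1 else 0)"
      unfolding cd using m n by (auto simp: of_nat_diff)
    show ?thesis using False i' j' unfolding seidel_matrix_def wq_def
      by (simp only: index_mat split: prod.split) (auto simp: r)
  qed
qed (auto simp: seidel_matrix_def)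

lemma quartic_roots:
  fixes q :: "real poly"
  assumes deg: "degree q = 4" and lc: "coeff q 4 = 1"
    and q0: "poly q 0 < 0" and x1: "0 < x1" and x12: "x1 < x2" and q1: "poly q x1 > 0" and q2: "poly q x2 < 0"
  shows "\<exists>r1 r2 s1 s2. q = [:-r1,1:] * [:-r2,1:] * [:-s1,1:] * [:-s2,1:] \<and> 0 < r1 \<and> 0 < r2 \<and> s1 < 0 \<and> 0 < s2"
proof -
  obtain r1 where r1: "0 < r1" "r1 < x1" "poly q r1 = 0" using poly_IVT_pos[OF x1 q0 q1] by blast
  obtain r2 where r2: "x1 < r2" "r2 < x2" "poly q r2 = 0" using poly_IVT_neg[OF x12 q1 q2] by blast
  from r1(3) have "[:-r1,1:] dvd q" by (simp add: poly_eq_0_iff_dvd)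
  then obtain q1' where Q1: "q = [:-r1,1:] * q1'" by (elim dvdE)
  have "poly q1' r2 = 0" using r2(3) r1 r2 unfolding Q1 by simp
  hence "[:-r2,1:] dvd q1'" by (simp add: poly_eq_0_iff_dvd)
  then obtain g where G: "q1' = [:-r2,1:] * g" by (elim dvdE)
  have qg: "q = [:-r1,1:] * [:-r2,1:] * g" using Q1 G by (metis mult.assoc)
  have gnz: "g \<noteq> 0" using deg qg by auto
  have l2: "degree ([:-r1,1:] * [:-r2,1:]) = 2"
    by (subst degree_mult_eq) auto
  have nz2: "[:-r1,1:] * [:-r2,1:] \<noteq> 0" by (simp only: mult_eq_0_iff) simp
  have dq: "degree q = 2 + degree g" unfolding qg
    by (subst degree_mult_eq[OF nz2 gnz]) (simp only: l2)
  hence dg: "degree g = 2" using deg by simp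
  have "lead_coeff q = lead_coeff g" unfolding qg lead_coeff_mult by simp
  hence lg: "coeff g 2 = 1" using deg lc dg by simp
  define c0 where "c0 = coeff g 0"
  define c1 where "c1 = coeff g 1"
  have gform: "g = [:c0, c1, 1:]"
  proof (rule poly_eqI)
    fix k show "coeff g k = coeff [:c0, c1, 1:] k"
    proof (cases "k \<le> 2")
      case True
      hence "k = 0 \<or> k = 1 \<or> k = 2" by auto
      thus ?thesis using lg unfolding c0_def c1_def by (auto simp: numeral_2_eq_2)
    next
      case False
      hence "coeff g k = 0" using dg by (intro coeff_eq_0) simp
      moreover have "coeff [:c0, c1, 1:] k = 0" using False by (intro coeff_eq_0) simp
      ultimately show ?thesis by simp
    qed
  qed
  have "poly q 0 = r1 * r2 * c0" unfolding qg gform by simp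
  hence "r1 * r2 * c0 < 0" using q0 by simp
  moreover have "0 < r1 * r2" using r1 r2 x1 by simp
  ultimately have c0n: "c0 < 0" by (meson not_less zero_le_mult_iff less_imp_le)
  define D where "D = sqrt (c1^2 - 4*c0)"
  have "0 \<le> c1^2" by simp
  hence "0 \<le> c1^2 - 4*c0" using c0n by linarith
  hence Dsq: "D^2 = c1^2 - 4*c0" unfolding D_def by simp
  have Dc1: "c1 < D" unfolding D_def using c0n by (intro real_less_rsqrt) simp
  have Dc2: "- c1 < D" unfolding D_def using c0n by (intro real_less_rsqrt) simp
  define s1 where "s1 = (- c1 - D) / 2"
  define s2 where "s2 = (- c1 + D) / 2"
  have s1: "s1 < 0" unfolding s1_def using Dc2 by simp
  have s2: "0 < s2" unfolding s2_def using Dc1 by simp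
  have "s1 * s2 = c0" unfolding s1_def s2_def using Dsq by (simp add: field_simps power2_eq_square) 
  moreover have "- s1 - s2 = c1" unfolding s1_def s2_def by (simp add: field_simps)
  ultimately have "g = [:-s1,1:] * [:-s2,1:]" unfolding gform by (simp add: mult.commute)
  hence "q = [:-r1,1:] * [:-r2,1:] * [:-s1,1:] * [:-s2,1:]" using qg by (metis mult.assoc)
  thus ?thesis using r1 r2 s1 s2 x1 by force
qed

lemma in_proots_iff:
  fixes p :: "complex poly"
  assumes "p \<noteq> 0"
  shows "x \<in># proots p \<longleftrightarrow> poly p x = 0"
  using assms by (simp add: count_greater_zero_iff[symmetric] order_root del: count_greater_zero_iff)

lemma quotient_roots:
  fixes m n :: nat and kk :: "real \<Rightarrow> real \<Rightarrow> nat \<Rightarrow> real"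
  assumes m: "m \<ge> 3" and n: "n \<ge> 3"
  and h0: "det (0 \<cdot>\<^sub>m 1\<^sub>m 4 - qmat (real m) (real n) (kk (real m) (real n))) < 0"
  and h1: "det (x1 \<cdot>\<^sub>m 1\<^sub>m 4 - qmat (real m) (real n) (kk (real m) (real n))) > 0"
  and h2: "det (x2 \<cdot>\<^sub>m 1\<^sub>m 4 - qmat (real m) (real n) (kk (real m) (real n))) < 0"
  and x1: "0 < x1" and x12: "x1 < x2"
  shows "\<exists>r1 r2 s1 s2. char_poly (qmat (real m) (real n) (kk (real m) (real n))) = [:-r1,1:] * [:-r2,1:] * [:-s1,1:] * [:-s2,1:] \<and> 0 < r1 \<and> 0 < r2 \<and> s1 < 0 \<and> 0 < s2"
proof -
  let ?Q = "qmat (real m) (real n) (kk (real m) (real n))"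
  have QC: "?Q \<in> carrier_mat 4 4" unfolding qmat_def by simp
  have d: "degree (char_poly ?Q) = 4" and l: "coeff (char_poly ?Q) 4 = 1" using degree_monic_char_poly[OF QC] by auto
  have p0: "poly (char_poly ?Q) 0 < 0" and p1: "poly (char_poly ?Q) x1 > 0" and p2: "poly (char_poly ?Q) x2 < 0"
    using h0 h1 h2 unfolding char_poly_eval[OF QC] by auto
  show ?thesis by (rule quartic_roots[OF d l p0 x1 x12 p1 p2])
qed

lemma quotient_roots_case1:
  fixes m n :: nat
  assumes m: "m \<ge> 3" and n: "n \<ge> 3"
  shows "\<exists>r1 r2 s1 s2. char_poly (qmat (real m) (real n) (k1 (real m) (real n))) = [:-r1,1:] * [:-r2,1:] * [:-s1,1:] * [:-s2,1:] \<and> 0 < r1 \<and> 0 < r2 \<and> s1 < 0 \<and> 0 < s2"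
proof -
  have a: "0 \<le> real m - 3" and b: "0 \<le> real n - 3" using m n by auto
  have e: "real m - 3 + 3 = real m" "real n - 3 + 3 = real n" by auto
  show ?thesis
    apply (rule quotient_roots[OF m n, of _ "2 * (real n - 3 + 3) - 1" "2 * (real m - 3 + 3) + 2 * (real n - 3 + 3) - 5"])
    using c1_0[OF a b] c1_x1[OF a b] c1_x2[OF a b] m n unfolding e by auto
qed

lemma quotient_roots_case2:
  fixes m n :: nat
  assumes m: "m \<ge> 3" and n: "n \<ge> 3"
  shows "\<exists>r1 r2 s1 s2. char_poly (qmat (real m) (real n) (k2 (real m) (real n))) = [:-r1,1:] * [:-r2,1:] * [:-s1,1:] * [:-s2,1:] \<and> 0 < r1 \<and> 0 < r2 \<and> s1 < 0 \<and> 0 < s2"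
proof -
  have a: "0 \<le> real m - 3" and b: "0 \<le> real n - 3" using m n by auto
  have e: "real m - 3 + 3 = real m" "real n - 3 + 3 = real n" by auto
  show ?thesis
    apply (rule quotient_roots[OF m n, of _ "2 * (real m - 3 + 3) - 1" "2 * (real m - 3 + 3) + 2 * (real n - 3 + 3) - 5"])
    using c2_0[OF a b] c2_x1[OF a b] c2_x2[OF a b] m n unfolding e by auto
qed


lemma wq_diag_neg:
  assumes "m \<ge> 3" "n \<ge> 3" "c < 4"
  shows "wq (real m) (real n) c c < 0"
proof -
  have "c = 0 \<or> c = 1 \<or> c = 2 \<or> c = 3" using assms(3) by auto
  thus ?thesis using assms(1,2) unfolding wq_def by auto
qed

lemma lt4_cases: "(c::nat) < 4 \<Longrightarrow> c = 0 \<or> c = 1 \<or> c = 2 \<or> c = 3" by auto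

theorem lemma2p10:
  fixes m n :: nat and e :: "nat set"
  assumes "m \<ge> 3" and "n \<ge> 3"
    and "e \<in> complete_bip3_edges m n"
  shows "\<exists>l rest. seidel_eigenvalues (m + n) (complete_bip3_edges m n - {e}) = add_mset l rest
           \<and> l \<in> \<real> \<and> Re l < 0
           \<and> (\<forall>x \<in># rest. x \<in> \<real> \<and> Re x > 0)"
proof -
  note m = assms(1) and n = assms(2) and e = assms(3)
  define cls where "cls = (\<lambda>i. (if i < m then 0 else 2) + (if i \<in> e then 1 else (0::nat)))"
  define w where "w = wq (real m) (real n)"
  define S where "S = seidel_matrix (m+n) (complete_bip3_edges m n - {e})"
  have S_eq: "S = mat (m+n) (m+n) (\<lambda>(i,j). if i = j then 0 else w (cls i) (cls j))"
    unfolding S_def w_def cls_def by (rule seidel_eq[OF assms])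
  have SC: "S \<in> carrier_mat (m+n) (m+n)" unfolding S_eq by simp
  have clsb: "\<And>i. i < m+n \<Longrightarrow> cls i < 4" unfolding cls_def by auto
  have ef: "e \<subseteq> {0..<m} \<union> {m..<m+n}" "card e = 3" "e \<inter> {0..<m} \<noteq> {}" "e \<inter> {m..<m+n} \<noteq> {}"
    using e unfolding complete_bip3_edges_def bip_part1_def bip_part2_def by auto
  define e1 where "e1 = e \<inter> {0..<m}"
  define e2 where "e2 = e \<inter> {m..<m+n}"
  have fe: "finite e" using ef(2) by (metis card.infinite zero_neq_numeral)
  have eu: "e = e1 \<union> e2" using ef(1) unfolding e1_def e2_def by auto
  have ed: "e1 \<inter> e2 = {}" unfolding e1_def e2_def by auto
  have fe1: "finite e1" and fe2: "finite e2" using fe unfolding e1_def e2_def by auto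
  have "card (e1 \<union> e2) = card e1 + card e2" by (rule card_Un_disjoint[OF fe1 fe2 ed])
  hence c12: "card e1 + card e2 = 3" using ef(2) eu by simp
  have ce1: "card e1 \<ge> 1" using ef(3) fe unfolding e1_def
    by (metis One_nat_def Suc_leI card_gt_0_iff finite_Int)
  have ce2: "card e2 \<ge> 1" using ef(4) fe unfolding e2_def
    by (metis One_nat_def Suc_leI card_gt_0_iff finite_Int)
  define K where "K = (\<lambda>c. card {i. i < m+n \<and> cls i = c})"
  have s0: "{i. i < m+n \<and> cls i = 0} = {0..<m} - e1" unfolding cls_def e1_def by auto
  have s1: "{i. i < m+n \<and> cls i = 1} = e1" using ef(1) unfolding cls_def e1_def by auto
  have s2: "{i. i < m+n \<and> cls i = 2} = {m..<m+n} - e2" unfolding cls_def e2_def by auto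
  have s3: "{i. i < m+n \<and> cls i = 3} = e2" using ef(1) unfolding cls_def e2_def by auto
  have K0: "K 0 = m - card e1" unfolding K_def s0 by (subst card_Diff_subset) (auto simp: e1_def)
  have K1: "K 1 = card e1" unfolding K_def s1 ..
  have K2: "K 2 = n - card e2" unfolding K_def s2 by (subst card_Diff_subset) (auto simp: e2_def)
  have K3: "K 3 = card e2" unfolding K_def s3 ..
  have Kpos: "\<And>c. c < 4 \<Longrightarrow> card {i. i < m+n \<and> cls i = c} \<ge> 1"
  proof -
    fix c :: nat assume "c < 4"
    hence "c = 0 \<or> c = 1 \<or> c = 2 \<or> c = 3" by (rule lt4_cases)
    thus "card {i. i < m+n \<and> cls i = c} \<ge> 1"
      using K0 K1 K2 K3 ce1 ce2 c12 m n unfolding K_def by auto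
  qed
  let ?Qm = "mat 4 4 (\<lambda>(c,d). w c d * real (card {i. i < m+n \<and> cls i = d}) - (if c = d then w c c else 0))"
  have CP: "char_poly S = (\<Prod>c<4. [: w c c, 1 :] ^ (card {i. i < m+n \<and> cls i = c} - 1)) * char_poly ?Qm"
    unfolding S_eq by (rule equit_charpoly[OF clsb Kpos])
  obtain r1 r2 s1 s2 where QF: "char_poly ?Qm = [:-r1,1:] * [:-r2,1:] * [:-s1,1:] * [:-s2,1:]"
    and sg: "0 < r1" "0 < r2" "s1 < 0" "0 < s2"
  proof -
    have "card e1 = 1 \<or> card e1 = 2" using c12 ce1 ce2 by auto
    thus ?thesis
    proof
      assume h: "card e1 = 1"
      hence h2: "card e2 = 2" using c12 by simp
      have kd: "\<And>d. d < 4 \<Longrightarrow> real (card {i. i < m+n \<and> cls i = d}) = k1 (real m) (real n) d"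
      proof -
        fix d :: nat assume d: "d < 4"
        show "real (card {i. i < m+n \<and> cls i = d}) = k1 (real m) (real n) d"
          using lt4_cases[OF d] K0 K1 K2 K3 h h2 m n unfolding K_def k1_def by (auto simp: of_nat_diff)
      qed
      have "?Qm = qmat (real m) (real n) (k1 (real m) (real n))"
        unfolding qmat_def w_def by (intro eq_matI) (auto simp: kd)
      thus ?thesis using quotient_roots_case1[OF m n] that by auto
    next
      assume h: "card e1 = 2"
      hence h2: "card e2 = 1" using c12 by simp
      have kd: "\<And>d. d < 4 \<Longrightarrow> real (card {i. i < m+n \<and> cls i = d}) = k2 (real m) (real n) d"
      proof -
        fix d :: nat assume d: "d < 4"
        show "real (card {i. i < m+n \<and> cls i = d}) = k2 (real m) (real n) d"
          using lt4_cases[OF d] K0 K1 K2 K3 h h2 m n unfolding K_def k2_def by (auto simp: of_nat_diff)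
      qed
      have "?Qm = qmat (real m) (real n) (k2 (real m) (real n))"
        unfolding qmat_def w_def by (intro eq_matI) (auto simp: kd)
      thus ?thesis using quotient_roots_case2[OF m n] that by auto
    qed
  qed
  interpret h: map_poly_comm_ring_hom "of_real :: real \<Rightarrow> complex" ..
  define PC where "PC = (\<Prod>c<4. [: complex_of_real (w c c), 1 :] ^ (card {i. i < m+n \<and> cls i = c} - 1))"
  have mapP: "map_poly complex_of_real (\<Prod>c<4. [: w c c, 1 :] ^ (card {i. i < m+n \<and> cls i = c} - 1)) = PC"
    unfolding PC_def h.hom_prod h.hom_power by simp
  have mapL: "map_poly complex_of_real ([:-r1,1:] * [:-r2,1:] * [:-s1,1:] * [:-s2,1:])
      = [:-of_real r1,1:] * [:-of_real r2,1:] * [:-of_real s1,1:] * [:-of_real s2,1:]"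
    unfolding h.hom_mult by simp
  have PCnz: "PC \<noteq> 0" unfolding PC_def by simp
  have ev: "seidel_eigenvalues (m + n) (complete_bip3_edges m n - {e}) =
      proots (PC * ([:-of_real r1,1:] * [:-of_real r2,1:] * [:-of_real s1,1:] * [:-of_real s2,1:]))"
    unfolding seidel_eigenvalues_def S_def[symmetric] of_real_hom.char_poly_hom[OF SC] CP QF h.hom_mult mapP by simp
  have pr: "proots (PC * ([:-of_real r1,1:] * [:-of_real r2,1:] * [:-of_real s1,1:] * [:-of_real s2,1:]))
     = add_mset (complex_of_real s1) (proots PC + {#complex_of_real r1, complex_of_real r2, complex_of_real s2#})"
  proof -
    have nz: "\<And>a. [:-a,1:] \<noteq> (0::complex poly)" by simp
    let ?L1 = "[:-complex_of_real r1,1:]" and ?L2 = "[:-complex_of_real r2,1:]"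
    let ?L3 = "[:-complex_of_real s1,1:]" and ?L4 = "[:-complex_of_real s2,1:]"
    have n12: "?L1 * ?L2 \<noteq> 0" using nz by (metis mult_eq_0_iff)
    have n123: "?L1 * ?L2 * ?L3 \<noteq> 0" using nz n12 by (metis mult_eq_0_iff)
    have n1234: "?L1 * ?L2 * ?L3 * ?L4 \<noteq> 0" using nz n123 by (metis mult_eq_0_iff)
    have "proots (PC * (?L1 * ?L2 * ?L3 * ?L4)) = proots PC + (proots ?L1 + proots ?L2 + proots ?L3 + proots ?L4)"
      by (simp only: proots_mult[OF PCnz n1234] proots_mult[OF n123 nz] proots_mult[OF n12 nz] proots_mult[OF nz nz])
    thus ?thesis by (simp add: add_mset_commute)
  qed
  show ?thesis
  proof (intro exI conjI)
    show "seidel_eigenvalues (m + n) (complete_bip3_edges m n - {e}) = add_mset (complex_of_real s1) (proots PC + {#complex_of_real r1, complex_of_real r2, complex_of_real s2#})"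
      unfolding ev pr ..
    show "complex_of_real s1 \<in> \<real>" by simp
    show "Re (complex_of_real s1) < 0" using sg by simp
    show "\<forall>x\<in>#proots PC + {#complex_of_real r1, complex_of_real r2, complex_of_real s2#}. x \<in> \<real> \<and> 0 < Re x"
    proof
      fix x assume x: "x \<in># proots PC + {#complex_of_real r1, complex_of_real r2, complex_of_real s2#}"
      show "x \<in> \<real> \<and> 0 < Re x"
      proof (cases "x \<in># proots PC")
        case True
        hence "poly PC x = 0" using in_proots_iff[OF PCnz] by simp
        hence "\<exists>c\<in>{..<4}. (complex_of_real (w c c) + x) ^ (card {i. i < m+n \<and> cls i = c} - 1) = 0"
          unfolding PC_def poly_prod poly_power by (simp add: prod_zero_iff)
        then obtain c where c: "c < 4" and "complex_of_real (w c c) + x = 0" by auto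
        hence xe: "x = complex_of_real (- w c c)" by (simp add: add_eq_0_iff)
        have "w c c < 0" unfolding w_def by (rule wq_diag_neg[OF m n c])
        thus ?thesis unfolding xe by simp
      next
        case False
        thus ?thesis using x sg by auto
      qed
    qed
  qed
qed

end
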